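(* Let $D$ be an integral domain and $\star$ a semistar operation on $D$. If $D[X]$ is $\star[X]$-catenarian (i.e. $\star[X]$-catenary), then $D$ is a $\widetilde{\star}$-strong S-domain.
   Context: Let $D$ be an integral domain with quotient field $K$, $\overline{\mathcal{F}}(D)$ the set of nonzero $D$-submodules of $K$. A semistar operation on $D$ is a map $\star:\overline{\mathcal{F}}(D)\to\overline{\mathcal{F}}(D)$ with $(xE)^\star=xE^\star$ for nonzero $x\in K$, $E\subseteq F\Rightarrow E^\star\subseteq F^\star$, and $E\subseteq E^\star=(E^\star)^\star$. $E^{\star_f}:=\bigcup\{F^\star:F\subseteq E\text{ nonzero finitely generated}\}$. For a semistar operation $\ast$, a nonzero ideal $I$ is a quasi-$\ast$-ideal if $I^\ast\cap D=I$; quasi-$\ast$-primes are prime quasi-$\ast$-ideals, quasi-$\ast$-maximal ideals are maximal among proper quasi-$\ast$-ideals. $E^{\widetilde\star}:=\bigcap\{ED_P:P\in\mathrm{QMax}^{\star_f}(D)\}$. For an indeterminate $X$: $\Theta:=\{Q\in\mathrm{Spec}(D[X]):Q\cap D=(0)\text{ or }(Q\cap D)^{\star_f}\subsetneq D^\star\}$, $\mathfrak S:=D[X][Y]\setminus\bigcup\{Q[Y]:Q\in\Theta\}$, and $E^{\star[X]}:=E[Y]_{\mathfrak S}\cap K(X)$ defines a semistar operation $\star[X]$ on $D[X]$, with $\widetilde\star[X]=\star[X]$. A domain $R$ with semistar operation $\ast$ is $\ast$-catenary if for each pair $P\subset Q$ of quasi-$\ast$-primes, any two saturated chains of quasi-$\ast$-primes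 between $P$ and $Q$ have the same finite length. For a semistar operation $\ast$ on $D$, $D$ is a $\ast$-strong S-domain if each pair of adjacent quasi-$\ast$-primes $P_1\subset P_2$ of $D$ extends to adjacent quasi-$\ast[X]$-primes $P_1[X]\subset P_2[X]$ of $D[X]$. *)

theory Defs
  imports "HOL-Computational_Algebra.Polynomial" "HOL-Computational_Algebra.Fraction_Field"
begin

text \<open>An integral domain D is represented as a subring of a field 'a which is its
quotient field (every element of 'a is a quotient of elements of D).\<close>

definition subring_of :: "'b::field set \<Rightarrow> bool" where
  "subring_of R \<longleftrightarrow> 0 \<in> R \<and> 1 \<in> R \<and> (\<forall>x\<in>R. \<forall>y\<in>R. x + y \<in> R \<and> x * y \<in> R \<and> - x \<in> R)"

definition domain_with_qf :: "'b::field set \<Rightarrow> bool" where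
  "domain_with_qf D \<longleftrightarrow> subring_of D \<and> (\<forall>x. \<exists>a\<in>D. \<exists>b\<in>D. b \<noteq> 0 \<and> x = a / b)"

definition submod :: "'b::field set \<Rightarrow> 'b set \<Rightarrow> bool" where
  "submod R E \<longleftrightarrow> 0 \<in> E \<and> (\<forall>x\<in>E. \<forall>y\<in>E. x + y \<in> E) \<and> (\<forall>r\<in>R. \<forall>x\<in>E. r * x \<in> E)"

definition Fbar :: "'b::field set \<Rightarrow> 'b set set" where
  "Fbar R = {E. submod R E \<and> E \<noteq> {0}}"

definition semistar :: "'b::field set \<Rightarrow> ('b set \<Rightarrow> 'b set) \<Rightarrow> bool" where
  "semistar R st \<longleftrightarrow>
     (\<forall>E\<in>Fbar R. st E \<in> Fbar R) \<and>
     (\<forall>x E. x \<noteq> 0 \<longrightarrow> E \<in> Fbar R \<longrightarrow> st ((\<lambda>e. x * e) ` E) = (\<lambda>e. x * e) ` st E) \<and>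
     (\<forall>E\<in>Fbar R. \<forall>F\<in>Fbar R. E \<subseteq> F \<longrightarrow> st E \<subseteq> st F) \<and>
     (\<forall>E\<in>Fbar R. E \<subseteq> st E \<and> st (st E) = st E)"

definition fin_gen :: "'b::field set \<Rightarrow> 'b set \<Rightarrow> bool" where
  "fin_gen R F \<longleftrightarrow> (\<exists>S. finite S \<and> F = {\<Sum>s\<in>S. r s * s | r. \<forall>s\<in>S. r s \<in> R})"

definition star_f :: "'b::field set \<Rightarrow> ('b set \<Rightarrow> 'b set) \<Rightarrow> 'b set \<Rightarrow> 'b set" where
  "star_f R st E = \<Union>{st F | F. F \<in> Fbar R \<and> fin_gen R F \<and> F \<subseteq> E}"

definition ideal_of :: "'b::field set \<Rightarrow> 'b set \<Rightarrow> bool" where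
  "ideal_of R I \<longleftrightarrow> I \<subseteq> R \<and> submod R I"

definition prime_ideal_of :: "'b::field set \<Rightarrow> 'b set \<Rightarrow> bool" where
  "prime_ideal_of R P \<longleftrightarrow> ideal_of R P \<and> P \<noteq> R \<and>
     (\<forall>a\<in>R. \<forall>b\<in>R. a * b \<in> P \<longrightarrow> a \<in> P \<or> b \<in> P)"

definition quasi_ideal :: "'b::field set \<Rightarrow> ('b set \<Rightarrow> 'b set) \<Rightarrow> 'b set \<Rightarrow> bool" where
  "quasi_ideal R st I \<longleftrightarrow> ideal_of R I \<and> I \<noteq> {0} \<and> st I \<inter> R = I"

definition quasi_prime :: "'b::field set \<Rightarrow> ('b set \<Rightarrow> 'b set) \<Rightarrow> 'b set \<Rightarrow> bool" where
  "quasi_prime R st P \<longleftrightarrow> quasi_ideal R st P \<and> prime_ideal_of R P"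

definition quasi_max :: "'b::field set \<Rightarrow> ('b set \<Rightarrow> 'b set) \<Rightarrow> 'b set \<Rightarrow> bool" where
  "quasi_max R st M \<longleftrightarrow> quasi_ideal R st M \<and> M \<noteq> R \<and>
     (\<forall>I. quasi_ideal R st I \<and> I \<noteq> R \<and> M \<subseteq> I \<longrightarrow> I = M)"

definition loc :: "'b::field set \<Rightarrow> 'b set \<Rightarrow> 'b set \<Rightarrow> 'b set" where
  "loc R P E = {e / s | e s. e \<in> E \<and> s \<in> R \<and> s \<notin> P}"

definition star_tilde :: "'b::field set \<Rightarrow> ('b set \<Rightarrow> 'b set) \<Rightarrow> 'b set \<Rightarrow> 'b set" where
  "star_tilde R st E = \<Inter>{loc R P E | P. quasi_max R (star_f R st) P}"

definition qprimes_between :: "'b::field set \<Rightarrow> ('b set \<Rightarrow> 'b set) \<Rightarrow> 'b set \<Rightarrow> 'b set \<Rightarrow> 'b set set" where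
  "qprimes_between R st P Q = {I. quasi_prime R st I \<and> P \<subseteq> I \<and> I \<subseteq> Q}"

definition is_chain_of :: "'c set set \<Rightarrow> bool" where
  "is_chain_of C \<longleftrightarrow> (\<forall>A\<in>C. \<forall>B\<in>C. A \<subseteq> B \<or> B \<subseteq> A)"

definition sat_chain :: "'b::field set \<Rightarrow> ('b set \<Rightarrow> 'b set) \<Rightarrow> 'b set \<Rightarrow> 'b set \<Rightarrow> 'b set set \<Rightarrow> bool" where
  "sat_chain R st P Q C \<longleftrightarrow> C \<subseteq> qprimes_between R st P Q \<and> P \<in> C \<and> Q \<in> C \<and> is_chain_of C \<and>
     (\<forall>C'. C \<subseteq> C' \<and> C' \<subseteq> qprimes_between R st P Q \<and> is_chain_of C' \<longrightarrow> C' = C)"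

definition star_catenary :: "'b::field set \<Rightarrow> ('b set \<Rightarrow> 'b set) \<Rightarrow> bool" where
  "star_catenary R st \<longleftrightarrow>
     (\<forall>P Q. quasi_prime R st P \<and> quasi_prime R st Q \<and> P \<subset> Q \<longrightarrow>
        (\<forall>C1 C2. sat_chain R st P Q C1 \<and> sat_chain R st P Q C2 \<longrightarrow>
           finite C1 \<and> finite C2 \<and> card C1 = card C2))"

definition adjacent_qprimes :: "'b::field set \<Rightarrow> ('b set \<Rightarrow> 'b set) \<Rightarrow> 'b set \<Rightarrow> 'b set \<Rightarrow> bool" where
  "adjacent_qprimes R st P1 P2 \<longleftrightarrow> quasi_prime R st P1 \<and> quasi_prime R st P2 \<and> P1 \<subset> P2 \<and>
     \<not> (\<exists>P. quasi_prime R st P \<and> P1 \<subset> P \<and> P \<subset> P2)"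

definition to_fract :: "'c::idom \<Rightarrow> 'c fract" where
  "to_fract x = Fract x 1"

text \<open>K(X) is the type 'a poly fract; D[X] is embedded via to_fract.\<close>
definition polyring :: "'a::field set \<Rightarrow> 'a poly fract set" where
  "polyring D = to_fract ` {p. \<forall>i. coeff p i \<in> D}"

definition ext_ideal :: "'a::field set \<Rightarrow> 'a poly fract set" where
  "ext_ideal P = to_fract ` {p. \<forall>i. coeff p i \<in> P}"

definition contr :: "'a::field set \<Rightarrow> 'a poly fract set \<Rightarrow> 'a set" where
  "contr D Q = {c \<in> D. to_fract [:c:] \<in> Q}"

definition Theta :: "'a::field set \<Rightarrow> ('a set \<Rightarrow> 'a set) \<Rightarrow> 'a poly fract set set" where
  "Theta D st = {Q. prime_ideal_of (polyring D) Q \<and>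
      (contr D Q = {0} \<or> star_f D st (contr D Q) \<subset> st D)}"

text \<open>The multiplicative set S of D[X][Y]; polynomials in Y over D[X] are 'a poly poly.\<close>
definition Smult :: "'a::field set \<Rightarrow> ('a set \<Rightarrow> 'a set) \<Rightarrow> 'a poly poly set" where
  "Smult D st = {s. (\<forall>i j. coeff (coeff s i) j \<in> D) \<and>
      (\<forall>Q\<in>Theta D st. \<exists>i. to_fract (coeff s i) \<notin> Q)}"

text \<open>E^{star[X]} = E[Y]_S \<inter> K(X): z in K(X) lies in E[Y]_S iff s z \<in> E[Y] for some s \<in> S,
i.e. every coefficient of s times z lies in E.\<close>
definition starX :: "'a::field set \<Rightarrow> ('a set \<Rightarrow> 'a set) \<Rightarrow> 'a poly fract set \<Rightarrow> 'a poly fract set" where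
  "starX D st E = {z. \<exists>s\<in>Smult D st. \<forall>i. to_fract (coeff s i) * z \<in> E}"

definition strong_S_domain :: "'a::field set \<Rightarrow> ('a set \<Rightarrow> 'a set) \<Rightarrow> bool" where
  "strong_S_domain D st \<longleftrightarrow>
     (\<forall>P1 P2. adjacent_qprimes D st P1 P2 \<longrightarrow>
        adjacent_qprimes (polyring D) (starX D st) (ext_ideal P1) (ext_ideal P2))"

end

theory Submission
  imports Defs
begin

definition PD :: "'a::field set \<Rightarrow> 'a poly set" where
  "PD S = {p. \<forall>i. coeff p i \<in> S}"

lemma sum_closed_submod:
  assumes "0 \<in> E" "\<forall>x\<in>E. \<forall>y\<in>E. x + y \<in> E" "\<forall>i\<in>A. f i \<in> E"
  shows "sum f A \<in> E"
proof (cases "finite A")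
  case True
  then show ?thesis using assms(3)
    by (induction A rule: finite_induct) (auto simp: assms(1,2))
qed (simp add: assms(1))

lemma subringD:
  assumes "subring_of D"
  shows "0 \<in> D" "1 \<in> D" "x \<in> D \<Longrightarrow> y \<in> D \<Longrightarrow> x + y \<in> D"
    "x \<in> D \<Longrightarrow> y \<in> D \<Longrightarrow> x * y \<in> D" "x \<in> D \<Longrightarrow> - x \<in> D"
    "x \<in> D \<Longrightarrow> y \<in> D \<Longrightarrow> x - y \<in> D"
proof -
  have A: "0 \<in> D" "1 \<in> D" "\<And>x y. x \<in> D \<Longrightarrow> y \<in> D \<Longrightarrow> x + y \<in> D \<and> x * y \<in> D \<and> - x \<in> D"
    using assms unfolding subring_of_def by blast+
  show "0 \<in> D" "1 \<in> D" by (fact A(1), fact A(2))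
  show "x \<in> D \<Longrightarrow> y \<in> D \<Longrightarrow> x + y \<in> D" using A(3) by blast
  show "x \<in> D \<Longrightarrow> y \<in> D \<Longrightarrow> x * y \<in> D" using A(3) by blast
  show "x \<in> D \<Longrightarrow> - x \<in> D" using A(3) by blast
  show "x \<in> D \<Longrightarrow> y \<in> D \<Longrightarrow> x - y \<in> D"
  proof -
    assume "x \<in> D" "y \<in> D"
    then have "x + - y \<in> D" using A(3) by blast
    then show ?thesis by simp
  qed
qed

lemma idealD:
  assumes "subring_of D" "ideal_of D P"
  shows "P \<subseteq> D" "0 \<in> P" "x \<in> P \<Longrightarrow> y \<in> P \<Longrightarrow> x + y \<in> P"
    "r \<in> D \<Longrightarrow> x \<in> P \<Longrightarrow> r * x \<in> P" "r \<in> D \<Longrightarrow> x \<in> P \<Longrightarrow> x * r \<in> P"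
    "x \<in> P \<Longrightarrow> - x \<in> P" "x \<in> P \<Longrightarrow> y \<in> P \<Longrightarrow> x - y \<in> P"
proof -
  have A: "P \<subseteq> D" "0 \<in> P" "\<And>x y. x \<in> P \<Longrightarrow> y \<in> P \<Longrightarrow> x + y \<in> P"
    "\<And>r x. r \<in> D \<Longrightarrow> x \<in> P \<Longrightarrow> r * x \<in> P"
    using assms(2) unfolding ideal_of_def submod_def by blast+
  have m1: "- 1 \<in> D" using subringD(2,5)[OF assms(1)] by blast
  have neg: "\<And>x. x \<in> P \<Longrightarrow> - x \<in> P"
  proof -
    fix x assume "x \<in> P"
    then have "(-1) * x \<in> P" using A(4) m1 by blast
    then show "- x \<in> P" by simp
  qed
  show "P \<subseteq> D" "0 \<in> P" by (fact A(1), fact A(2))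
  show "x \<in> P \<Longrightarrow> y \<in> P \<Longrightarrow> x + y \<in> P" by (rule A(3))
  show "r \<in> D \<Longrightarrow> x \<in> P \<Longrightarrow> r * x \<in> P" by (rule A(4))
  show "r \<in> D \<Longrightarrow> x \<in> P \<Longrightarrow> x * r \<in> P" using A(4)[of r x] by (simp add: mult.commute)
  show "x \<in> P \<Longrightarrow> - x \<in> P" by (rule neg)
  show "x \<in> P \<Longrightarrow> y \<in> P \<Longrightarrow> x - y \<in> P"
  proof -
    assume "x \<in> P" "y \<in> P"
    then have "x + - y \<in> P" using A(3) neg by blast
    then show ?thesis by simp
  qed
qed

lemma D_ideal: "subring_of D \<Longrightarrow> ideal_of D D"
  unfolding ideal_of_def submod_def subring_of_def by auto

lemma PD_mult:
  assumes "subring_of D" "ideal_of D P" "r \<in> PD D" "p \<in> PD P"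
  shows "r * p \<in> PD P" "p * r \<in> PD P"
proof -
  note I = idealD[OF assms(1,2)]
  have "coeff (r * p) n \<in> P" for n
    unfolding coeff_mult
  proof (rule sum_closed_submod)
    show "0 \<in> P" by (rule I(2))
    show "\<forall>x\<in>P. \<forall>y\<in>P. x + y \<in> P" using I(3) by blast
    show "\<forall>i\<in>{..n}. coeff r i * coeff p (n - i) \<in> P"
      using I(4) assms(3,4) unfolding PD_def by blast
  qed
  then show "r * p \<in> PD P" "p * r \<in> PD P" unfolding PD_def by (simp_all add: mult.commute)
qed

lemma PD_add:
  assumes "subring_of D" "ideal_of D P" "p \<in> PD P" "q \<in> PD P"
  shows "p + q \<in> PD P" "p - q \<in> PD P" "- p \<in> PD P"
proof -
  note I = idealD[OF assms(1,2)]
  have a: "coeff p i \<in> P" "coeff q i \<in> P" for i using assms(3,4) unfolding PD_def by blast+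
  show "p + q \<in> PD P" unfolding PD_def using I(3)[OF a] by simp
  show "p - q \<in> PD P" unfolding PD_def using I(7)[OF a] by simp
  show "- p \<in> PD P" unfolding PD_def using I(6)[OF a(1)] by simp
qed

lemma PD_const: "[:c:] \<in> PD S \<longleftrightarrow> c \<in> S \<and> 0 \<in> S"
  unfolding PD_def by (auto simp: coeff_pCons split: nat.splits)

lemma PD_mono: "S \<subseteq> T \<Longrightarrow> PD S \<subseteq> PD T"
  unfolding PD_def by auto

lemma to_fract_hom:
  "to_fract (a + b) = to_fract a + to_fract b"
  "to_fract (a * b) = to_fract a * to_fract b"
  "to_fract (- a) = - to_fract a"
  "to_fract (a - b) = to_fract a - to_fract b"
  "to_fract 0 = 0" "to_fract 1 = 1"
  unfolding to_fract_def by (simp_all add: Zero_fract_def One_fract_def)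

lemma to_fract_inj: "to_fract a = to_fract b \<longleftrightarrow> a = b"
  unfolding to_fract_def by (simp add: eq_fract)

lemma inj_to_fract: "inj to_fract"
  by (simp add: inj_def to_fract_inj)

lemma PD_lead_red:
  assumes "subring_of D" "ideal_of D P" "f \<in> PD D" "lead_coeff f \<in> P" "degree f > 0"
  shows "f - monom (lead_coeff f) (degree f) \<in> PD D"
    "degree (f - monom (lead_coeff f) (degree f)) < degree f"
    "f \<in> PD P \<longleftrightarrow> f - monom (lead_coeff f) (degree f) \<in> PD P"
    "\<forall>g\<in>PD D. f * g \<in> PD P \<longleftrightarrow> (f - monom (lead_coeff f) (degree f)) * g \<in> PD P"
proof -
  define f' where "f' = f - monom (lead_coeff f) (degree f)"
  note I = idealD[OF assms(1,2)]
  have mP: "monom (lead_coeff f) (degree f) \<in> PD P"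
    unfolding PD_def using assms(4) I(2) by (auto simp: coeff_monom)
  hence mD: "monom (lead_coeff f) (degree f) \<in> PD D" using PD_mono[OF I(1)] by auto
  show "f - monom (lead_coeff f) (degree f) \<in> PD D"
    using PD_add(2)[OF assms(1) D_ideal[OF assms(1)] assms(3) mD] .
  have c0: "coeff f' (degree f) = 0" unfolding f'_def by simp
  have "degree f' \<le> degree f" unfolding f'_def
    by (rule degree_diff_le) (simp_all add: degree_monom_le)
  have "degree f' < degree f"
  proof (cases "f' = 0")
    case True then show ?thesis using assms(5) by simp
  next
    case False
    then have "coeff f' (degree f') \<noteq> 0" by simp
    then have "degree f' \<noteq> degree f" using c0 by metis
    with \<open>degree f' \<le> degree f\<close> show ?thesis by simp
  qed
  then show "degree (f - monom (lead_coeff f) (degree f)) < degree f" unfolding f'_def .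
  have ff: "f = f' + monom (lead_coeff f) (degree f)" unfolding f'_def by simp
  have "f \<in> PD P \<longleftrightarrow> f' \<in> PD P"
  proof
    assume "f \<in> PD P" then show "f' \<in> PD P" unfolding f'_def by (rule PD_add(2)[OF assms(1,2) _ mP])
  next
    assume "f' \<in> PD P" then show "f \<in> PD P" using ff PD_add(1)[OF assms(1,2) _ mP] by metis
  qed
  then show "f \<in> PD P \<longleftrightarrow> f - monom (lead_coeff f) (degree f) \<in> PD P" unfolding f'_def .
  show "\<forall>g\<in>PD D. f * g \<in> PD P \<longleftrightarrow> (f - monom (lead_coeff f) (degree f)) * g \<in> PD P"
  proof
    fix g assume gD: "g \<in> PD D"
    have mg: "monom (lead_coeff f) (degree f) * g \<in> PD P"
      using assms(4) I(2,5) gD unfolding PD_def by (auto simp: coeff_monom_mult)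
    have e1: "(f - monom (lead_coeff f) (degree f)) * g = f * g - monom (lead_coeff f) (degree f) * g"
      by (simp add: algebra_simps)
    have e2: "f * g = (f - monom (lead_coeff f) (degree f)) * g + monom (lead_coeff f) (degree f) * g"
      by (simp add: algebra_simps)
    show "f * g \<in> PD P \<longleftrightarrow> (f - monom (lead_coeff f) (degree f)) * g \<in> PD P"
    proof
      assume "f * g \<in> PD P" then show "(f - monom (lead_coeff f) (degree f)) * g \<in> PD P"
        unfolding e1 by (rule PD_add(2)[OF assms(1,2) _ mg])
    next
      assume "(f - monom (lead_coeff f) (degree f)) * g \<in> PD P" then show "f * g \<in> PD P"
        unfolding e2 by (rule PD_add(1)[OF assms(1,2) _ mg])
    qed
  qed
qed

lemma PD_deg0:
  assumes "f \<in> PD D" "lead_coeff f \<in> P" "degree f = 0" "0 \<in> P"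
  shows "f \<in> PD P"
  unfolding PD_def mem_Collect_eq
proof (intro allI)
  fix i show "coeff f i \<in> P"
    using assms by (cases "i = 0") (auto simp: coeff_eq_0)
qed

lemma PD_prime:
  assumes "subring_of D" "prime_ideal_of D P"
  shows "f \<in> PD D \<Longrightarrow> g \<in> PD D \<Longrightarrow> f * g \<in> PD P \<Longrightarrow> f \<in> PD P \<or> g \<in> PD P"
proof (induction "degree f + degree g" arbitrary: f g rule: less_induct)
  case less
  have idl: "ideal_of D P" using assms(2) unfolding prime_ideal_of_def by auto
  note I = idealD[OF assms(1) idl]
  show ?case
  proof (cases "f = 0 \<or> g = 0")
    case True
    have "0 \<in> PD P" unfolding PD_def using I(2) by auto
    then show ?thesis using True by auto
  next
    case nz: False
    show ?thesis
    proof (cases "lead_coeff f \<in> P")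
      case lf: True
      show ?thesis
      proof (cases "degree f = 0")
        case True then show ?thesis using PD_deg0[OF less(2) lf True I(2)] by auto
      next
        case False
        have dp: "degree f > 0" using False by simp
        note R = PD_lead_red[OF assms(1) idl less(2) lf dp]
        have "f - monom (lead_coeff f) (degree f) \<in> PD P \<or> g \<in> PD P"
          apply (rule less(1))
          using R(2) apply simp
          using R(1) apply simp
          using less(3) apply simp
          using R(4) less(3,4) by blast
        then show ?thesis using R(3) by blast
      qed
    next
      case nlf: False
      show ?thesis
      proof (cases "lead_coeff g \<in> P")
        case lg: True
        show ?thesis
        proof (cases "degree g = 0")
          case True then show ?thesis using PD_deg0[OF less(3) lg True I(2)] by auto
        next
          case False
          have dp: "degree g > 0" using False by simp
          note R = PD_lead_red[OF assms(1) idl less(3) lg dp]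
          have "f \<in> PD P \<or> g - monom (lead_coeff g) (degree g) \<in> PD P"
            apply (rule less(1))
            using R(2) apply simp
            using less(2) apply simp
            using R(1) apply simp
            using R(4) less(2,4) by (metis mult.commute)
          then show ?thesis using R(3) by blast
        qed
      next
        case nlg: False
        have "coeff (f * g) (degree f + degree g) = lead_coeff f * lead_coeff g"
          by (rule coeff_mult_degree_sum)
        moreover have "coeff (f * g) (degree f + degree g) \<in> P" using less(4) unfolding PD_def by auto
        moreover have "lead_coeff f \<in> D" "lead_coeff g \<in> D" using less(2,3) unfolding PD_def by auto
        ultimately have "lead_coeff f \<in> P \<or> lead_coeff g \<in> P" using assms(2) unfolding prime_ideal_of_def by metis
        then show ?thesis using nlf nlg by blast
      qed
    qed
  qed
qed


lemma tf_mem: "to_fract a \<in> to_fract ` A \<longleftrightarrow> a \<in> A"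
  by (rule inj_image_mem_iff[OF inj_to_fract])

lemma polyring_eq: "polyring D = to_fract ` PD D"
  unfolding polyring_def PD_def by simp

lemma ext_ideal_eq: "ext_ideal P = to_fract ` PD P"
  unfolding ext_ideal_def PD_def by simp

lemma one_PD: assumes "subring_of D" shows "1 \<in> PD D"
proof -
  have "0 \<in> D" "1 \<in> D" using subringD(1,2)[OF assms] by blast+
  then show ?thesis unfolding PD_def by (simp add: coeff_1)
qed

lemma one_notin:
  assumes "ideal_of R E" "E \<noteq> R" "1 \<in> R"
  shows "1 \<notin> E"
proof
  assume "1 \<in> E"
  have "E \<subseteq> R" "\<forall>r\<in>R. \<forall>x\<in>E. r * x \<in> E" using assms(1) unfolding ideal_of_def submod_def by blast+
  then have "R \<subseteq> E" using \<open>1 \<in> E\<close> by force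
  then show False using \<open>E \<subseteq> R\<close> assms(2) by blast
qed

lemma ideal_polyI:
  assumes sub: "subring_of D" and AD: "A \<subseteq> PD D" and z: "0 \<in> A"
    and add: "\<And>a b. a \<in> A \<Longrightarrow> b \<in> A \<Longrightarrow> a + b \<in> A"
    and mul: "\<And>r a. r \<in> PD D \<Longrightarrow> a \<in> A \<Longrightarrow> r * a \<in> A"
  shows "ideal_of (polyring D) (to_fract ` A)"
  unfolding ideal_of_def submod_def polyring_eq
proof (intro conjI ballI)
  show "to_fract ` A \<subseteq> to_fract ` PD D" using AD by blast
  show "0 \<in> to_fract ` A" using z to_fract_hom(5) by (metis image_eqI)
  fix x y assume "x \<in> to_fract ` A" "y \<in> to_fract ` A"
  then obtain a b where "a \<in> A" "b \<in> A" "x = to_fract a" "y = to_fract b" by blast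
  then show "x + y \<in> to_fract ` A" using add[of a b] by (simp add: to_fract_hom(1)[symmetric])
next
  fix r x assume "r \<in> to_fract ` PD D" "x \<in> to_fract ` A"
  then obtain a b where "a \<in> PD D" "b \<in> A" "r = to_fract a" "x = to_fract b" by blast
  then show "r * x \<in> to_fract ` A" using mul[of a b] by (simp add: to_fract_hom(2)[symmetric])
qed

lemma prime_polyI:
  assumes sub: "subring_of D" and AD: "A \<subseteq> PD D" and z: "0 \<in> A"
    and add: "\<And>a b. a \<in> A \<Longrightarrow> b \<in> A \<Longrightarrow> a + b \<in> A"
    and mul: "\<And>r a. r \<in> PD D \<Longrightarrow> a \<in> A \<Longrightarrow> r * a \<in> A"
    and one: "1 \<notin> A"
    and pr: "\<And>f g. f \<in> PD D \<Longrightarrow> g \<in> PD D \<Longrightarrow> f * g \<in> A \<Longrightarrow> f \<in> A \<or> g \<in> A"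
  shows "prime_ideal_of (polyring D) (to_fract ` A)"
  unfolding prime_ideal_of_def
proof (intro conjI ballI impI)
  show "ideal_of (polyring D) (to_fract ` A)" by (rule ideal_polyI[OF assms(1-5)])
  show "to_fract ` A \<noteq> polyring D"
  proof
    assume "to_fract ` A = polyring D"
    then have "to_fract 1 \<in> to_fract ` A" using one_PD[OF sub] unfolding polyring_eq by blast
    then show False using one tf_mem by blast
  qed
  fix a b assume "a \<in> polyring D" "b \<in> polyring D" "a * b \<in> to_fract ` A"
  then obtain f g where "f \<in> PD D" "g \<in> PD D" "a = to_fract f" "b = to_fract g"
    unfolding polyring_eq by blast
  moreover then have "f * g \<in> A" using \<open>a * b \<in> to_fract ` A\<close> tf_mem by (metis to_fract_hom(2))
  ultimately show "a \<in> to_fract ` A \<or> b \<in> to_fract ` A" using pr by blast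
qed

lemma prime_oneD:
  assumes "subring_of D" "prime_ideal_of D P" shows "1 \<notin> P"
  using one_notin[of D P] assms subringD(2)[OF assms(1)] unfolding prime_ideal_of_def by blast

lemma ext_prime:
  assumes sub: "subring_of D" and pr: "prime_ideal_of D P"
  shows "prime_ideal_of (polyring D) (ext_ideal P)"
  unfolding ext_ideal_eq
proof (rule prime_polyI[OF sub])
  have idl: "ideal_of D P" using pr unfolding prime_ideal_of_def by blast
  note I = idealD[OF sub idl]
  show "PD P \<subseteq> PD D" by (rule PD_mono[OF I(1)])
  show "0 \<in> PD P" unfolding PD_def using I(2) by simp
  show "\<And>a b. a \<in> PD P \<Longrightarrow> b \<in> PD P \<Longrightarrow> a + b \<in> PD P" by (rule PD_add(1)[OF sub idl])
  show "\<And>r a. r \<in> PD D \<Longrightarrow> a \<in> PD P \<Longrightarrow> r * a \<in> PD P" by (rule PD_mult(1)[OF sub idl])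
  show "1 \<notin> PD P"
  proof
    assume "1 \<in> PD P" then have "coeff 1 0 \<in> P" unfolding PD_def by blast
    then show False using prime_oneD[OF sub pr] by simp
  qed
  show "\<And>f g. f \<in> PD D \<Longrightarrow> g \<in> PD D \<Longrightarrow> f * g \<in> PD P \<Longrightarrow> f \<in> PD P \<or> g \<in> PD P"
    by (rule PD_prime[OF sub pr])
qed

definition PXs :: "'a::field set \<Rightarrow> 'a set \<Rightarrow> 'a poly set" where
  "PXs D P = {p \<in> PD D. coeff p 0 \<in> P}"

definition PX :: "'a::field set \<Rightarrow> 'a set \<Rightarrow> 'a poly fract set" where
  "PX D P = to_fract ` PXs D P"

lemma coeff_mult_0: "coeff (f * g) 0 = coeff f 0 * coeff g 0"
  by (simp add: coeff_mult)

lemma PX_prime: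
  assumes sub: "subring_of D" and pr: "prime_ideal_of D P"
  shows "prime_ideal_of (polyring D) (PX D P)"
  unfolding PX_def
proof (rule prime_polyI[OF sub])
  have idl: "ideal_of D P" using pr unfolding prime_ideal_of_def by blast
  note I = idealD[OF sub idl]
  show "PXs D P \<subseteq> PD D" unfolding PXs_def by blast
  show "0 \<in> PXs D P" unfolding PXs_def PD_def using I(2) subringD(1)[OF sub] by simp
  show "\<And>a b. a \<in> PXs D P \<Longrightarrow> b \<in> PXs D P \<Longrightarrow> a + b \<in> PXs D P"
  proof -
    fix a b assume "a \<in> PXs D P" "b \<in> PXs D P"
    then have "a \<in> PD D" "b \<in> PD D" "coeff a 0 \<in> P" "coeff b 0 \<in> P" unfolding PXs_def by blast+
    then have "a + b \<in> PD D" "coeff (a + b) 0 \<in> P"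
      using PD_add(1)[OF sub D_ideal[OF sub]] I(3) by simp_all
    then show "a + b \<in> PXs D P" unfolding PXs_def by blast
  qed
  show "\<And>r a. r \<in> PD D \<Longrightarrow> a \<in> PXs D P \<Longrightarrow> r * a \<in> PXs D P"
  proof -
    fix r a assume "r \<in> PD D" "a \<in> PXs D P"
    then have aD: "a \<in> PD D" and "coeff a 0 \<in> P" unfolding PXs_def by blast+
    have "r * a \<in> PD D" using PD_mult(1)[OF sub D_ideal[OF sub] \<open>r \<in> PD D\<close> aD] .
    moreover have "coeff r 0 \<in> D" using \<open>r \<in> PD D\<close> unfolding PD_def by blast
    moreover have "coeff r 0 * coeff a 0 \<in> P" using I(4) \<open>coeff r 0 \<in> D\<close> \<open>coeff a 0 \<in> P\<close> by metis
    ultimately show "r * a \<in> PXs D P" unfolding PXs_def by (simp add: coeff_mult_0)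
  qed
  show "1 \<notin> PXs D P"
  proof
    assume "1 \<in> PXs D P" then have "coeff 1 0 \<in> P" unfolding PXs_def by blast
    then show False using prime_oneD[OF sub pr] by simp
  qed
  show "\<And>f g. f \<in> PD D \<Longrightarrow> g \<in> PD D \<Longrightarrow> f * g \<in> PXs D P \<Longrightarrow> f \<in> PXs D P \<or> g \<in> PXs D P"
  proof -
    fix f g assume a: "f \<in> PD D" "g \<in> PD D" "f * g \<in> PXs D P"
    have "coeff (f * g) 0 \<in> P" using a(3) unfolding PXs_def by blast
    then have "coeff f 0 * coeff g 0 \<in> P" unfolding coeff_mult_0 .
    moreover have "coeff f 0 \<in> D" "coeff g 0 \<in> D" using a(1,2) unfolding PD_def by blast+
    ultimately have "coeff f 0 * coeff g 0 \<in> P" "coeff f 0 \<in> D" "coeff g 0 \<in> D" by blast+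
    then have "coeff f 0 \<in> P \<or> coeff g 0 \<in> P" using pr unfolding prime_ideal_of_def by blast
    then show "f \<in> PXs D P \<or> g \<in> PXs D P" using a(1,2) unfolding PXs_def by blast
  qed
qed

lemma contr_img: "contr D (to_fract ` A) = {c \<in> D. [:c:] \<in> A}"
  unfolding contr_def tf_mem by simp

lemma contr_ext:
  assumes "subring_of D" "ideal_of D P" shows "contr D (ext_ideal P) = P"
  unfolding ext_ideal_eq contr_img PD_const using idealD(1,2)[OF assms] by blast

lemma contr_PX:
  assumes "subring_of D" "ideal_of D P" shows "contr D (PX D P) = P"
proof -
  have "P \<subseteq> D" "0 \<in> P" "0 \<in> D" using idealD(1,2)[OF assms] subringD(1)[OF assms(1)] by blast+
  then show ?thesis unfolding PX_def contr_img PXs_def by (auto simp add: PD_const)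
qed


lemma primeD:
  assumes "prime_ideal_of R P" "a \<in> R" "b \<in> R" "a * b \<in> P"
  shows "a \<in> P \<or> b \<in> P"
proof -
  have "\<forall>a\<in>R. \<forall>b\<in>R. a * b \<in> P \<longrightarrow> a \<in> P \<or> b \<in> P"
    using assms(1) unfolding prime_ideal_of_def by (elim conjE)
  then show ?thesis using assms(2-4) by blast
qed

lemma qmaxD:
  assumes "quasi_max D st M"
  shows "ideal_of D M" "M \<noteq> D" "st M \<inter> D = M" "0 \<in> M" "M \<subseteq> D"
proof -
  have q: "quasi_ideal D st M" and "M \<noteq> D" using assms unfolding quasi_max_def by blast+
  then show i: "ideal_of D M" and "M \<noteq> D" and "st M \<inter> D = M" unfolding quasi_ideal_def by blast+
  then show "0 \<in> M" "M \<subseteq> D" unfolding ideal_of_def submod_def by blast+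
qed

lemma tilde_max:
  assumes sub: "subring_of D" and q: "quasi_ideal D (star_tilde D st) P" and ne: "P \<noteq> D"
  shows "\<exists>M. quasi_max D (star_f D st) M \<and> P \<subseteq> M"
proof (rule ccontr)
  assume nx: "\<not> (\<exists>M. quasi_max D (star_f D st) M \<and> P \<subseteq> M)"
  have idl: "ideal_of D P" and eq: "star_tilde D st P \<inter> D = P"
    using q unfolding quasi_ideal_def by blast+
  note I = idealD[OF sub idl]
  have "D \<subseteq> star_tilde D st P"
  proof
    fix d assume dD: "d \<in> D"
    show "d \<in> star_tilde D st P" unfolding star_tilde_def
    proof (rule InterI)
      fix X assume "X \<in> {loc D M P | M. quasi_max D (star_f D st) M}"
      then obtain M where X: "X = loc D M P" and qm: "quasi_max D (star_f D st) M" by blast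
      then have "\<not> P \<subseteq> M" using nx by blast
      then obtain p where pP: "p \<in> P" and pM: "p \<notin> M" by blast
      have "p \<noteq> 0" using pM qmaxD(4)[OF qm] by blast
      have pD: "p \<in> D" using pP I(1) by blast
      have dp: "d * p \<in> P" using I(4)[OF dD pP] .
      have "d = (d * p) / p" using \<open>p \<noteq> 0\<close> by simp
      then show "d \<in> X" unfolding X loc_def using dp pD pM by blast
    qed
  qed
  then have "D \<subseteq> P" using eq by blast
  then show False using I(1) ne by blast
qed

lemma tilde_prime:
  assumes sub: "subring_of D" and qm: "quasi_max D (star_f D st) M"
    and pr: "prime_ideal_of D J" and nz: "J \<noteq> {0}" and JM: "J \<subseteq> M"
  shows "quasi_prime D (star_tilde D st) J"
proof -
  have idl: "ideal_of D J" using pr unfolding prime_ideal_of_def by blast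
  note I = idealD[OF sub idl]
  have one: "1 \<in> D" using subringD(2)[OF sub] .
  have sup: "J \<subseteq> star_tilde D st J"
  proof
    fix j assume jJ: "j \<in> J"
    show "j \<in> star_tilde D st J" unfolding star_tilde_def
    proof (rule InterI)
      fix X assume "X \<in> {loc D N J | N. quasi_max D (star_f D st) N}"
      then obtain N where X: "X = loc D N J" and qn: "quasi_max D (star_f D st) N" by blast
      have "1 \<notin> N" using one_notin[OF qmaxD(1,2)[OF qn] one] .
      moreover have "j = j / 1" by simp
      ultimately show "j \<in> X" unfolding X loc_def mem_Collect_eq using jJ one by blast
    qed
  qed
  have sub2: "star_tilde D st J \<inter> D \<subseteq> J"
  proof
    fix z assume z: "z \<in> star_tilde D st J \<inter> D"
    have "loc D M J \<in> {loc D P J | P. quasi_max D (star_f D st) P}" using qm by blast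
    then have "z \<in> loc D M J" using z unfolding star_tilde_def by blast
    then obtain e s where zs: "z = e / s" and eJ: "e \<in> J" and sD: "s \<in> D" and sM: "s \<notin> M"
      unfolding loc_def by blast
    have "s \<noteq> 0" using sM qmaxD(4)[OF qm] by blast
    then have "z * s = e" unfolding zs by simp
    then have "z * s \<in> J" using eJ by simp
    moreover have "z \<in> D" using z by blast
    ultimately have "z \<in> J \<or> s \<in> J" using primeD[OF pr _ sD] by blast
    then show "z \<in> J" using sM JM by blast
  qed
  have "star_tilde D st J \<inter> D = J" using sup sub2 I(1) by blast
  then show ?thesis unfolding quasi_prime_def quasi_ideal_def using idl nz pr by blast
qed

lemma D_Fbar: assumes "subring_of D" shows "D \<in> Fbar D"
proof -
  have "submod D D" using D_ideal[OF assms] unfolding ideal_of_def by blast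
  moreover have "1 \<in> D" using subringD(2)[OF assms] .
  then have "D \<noteq> {0}" by auto
  ultimately show ?thesis unfolding Fbar_def by blast
qed

lemma theta_strict:
  assumes sub: "subring_of D" and sem: "semistar D st"
    and qm: "quasi_max D (star_f D st) M" and PM: "P \<subseteq> M"
  shows "star_f D st P \<subset> st D"
proof -
  have DF: "D \<in> Fbar D" by (rule D_Fbar[OF sub])
  have mono: "\<And>E F. E \<in> Fbar D \<Longrightarrow> F \<in> Fbar D \<Longrightarrow> E \<subseteq> F \<Longrightarrow> st E \<subseteq> st F"
    and ext: "\<And>E. E \<in> Fbar D \<Longrightarrow> E \<subseteq> st E"
    using sem unfolding semistar_def by blast+
  have MD: "M \<subseteq> D" using qmaxD(5)[OF qm] .
  have s1: "star_f D st P \<subseteq> st D"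
  proof
    fix x assume "x \<in> star_f D st P"
    then obtain F where F: "F \<in> Fbar D" "F \<subseteq> P" "x \<in> st F" unfolding star_f_def by blast
    have "F \<subseteq> D" using F(2) PM MD by blast
    then show "x \<in> st D" using mono[OF F(1) DF] F(3) by blast
  qed
  have "1 \<in> st D" using ext[OF DF] subringD(2)[OF sub] by blast
  moreover have "1 \<notin> star_f D st P"
  proof
    assume "1 \<in> star_f D st P"
    then have "1 \<in> star_f D st M" using PM unfolding star_f_def by blast
    then have "1 \<in> M" using qmaxD(3)[OF qm] subringD(2)[OF sub] by blast
    then show False using one_notin[OF qmaxD(1,2)[OF qm] subringD(2)[OF sub]] by blast
  qed
  ultimately show ?thesis using s1 by blast
qed

lemma theta_qprime:
  assumes sub: "subring_of D" and th: "E \<in> Theta D st" and nz: "E \<noteq> {0}"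
  shows "quasi_prime (polyring D) (starX D st) E"
proof -
  have pr: "prime_ideal_of (polyring D) E" using th unfolding Theta_def by blast
  have idl: "ideal_of (polyring D) E" and ER: "E \<subseteq> polyring D" and ne: "E \<noteq> polyring D"
    using pr unfolding prime_ideal_of_def ideal_of_def by blast+
  have E0: "0 \<in> E" using idl unfolding ideal_of_def submod_def by blast
  have oneR: "1 \<in> polyring D" using one_PD[OF sub] to_fract_hom(6) unfolding polyring_eq by (metis image_eqI)
  have D01: "0 \<in> D" "1 \<in> D" using subringD(1,2)[OF sub] by blast+
  have notin1: "\<And>Q. Q \<in> Theta D st \<Longrightarrow> 1 \<notin> Q"
  proof -
    fix Q assume "Q \<in> Theta D st"
    then have "prime_ideal_of (polyring D) Q" unfolding Theta_def by blast
    then show "1 \<notin> Q" using one_notin[OF _ _ oneR] unfolding prime_ideal_of_def by blast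
  qed
  have S1: "(1 :: 'a poly poly) \<in> Smult D st"
    unfolding Smult_def
  proof (intro CollectI conjI allI ballI)
    fix i j show "coeff (coeff (1 :: 'a poly poly) i) j \<in> D"
      using D01 by (cases "i = 0"; cases "j = 0") simp_all
  next
    fix Q assume "Q \<in> Theta D st"
    then have "to_fract (coeff (1 :: 'a poly poly) 0) \<notin> Q" using notin1 by (simp add: to_fract_hom(6))
    then show "\<exists>i. to_fract (coeff (1 :: 'a poly poly) i) \<notin> Q" by blast
  qed
  have A: "E \<subseteq> starX D st E"
  proof
    fix z assume zE: "z \<in> E"
    have "\<forall>i. to_fract (coeff (1 :: 'a poly poly) i) * z \<in> E"
    proof
      fix i show "to_fract (coeff (1 :: 'a poly poly) i) * z \<in> E"
        using zE E0 by (cases "i = 0") (simp_all add: to_fract_hom(5,6))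
    qed
    then show "z \<in> starX D st E" unfolding starX_def using S1 by blast
  qed
  have B: "starX D st E \<inter> polyring D \<subseteq> E"
  proof
    fix z assume z: "z \<in> starX D st E \<inter> polyring D"
    then obtain s where sS: "s \<in> Smult D st" and all: "\<forall>i. to_fract (coeff s i) * z \<in> E"
      unfolding starX_def by blast
    obtain i where ni: "to_fract (coeff s i) \<notin> E" using sS th unfolding Smult_def by blast
    have "coeff s i \<in> PD D" using sS unfolding Smult_def PD_def by blast
    then have "to_fract (coeff s i) \<in> polyring D" unfolding polyring_eq by blast
    then have "to_fract (coeff s i) \<in> E \<or> z \<in> E" using primeD[OF pr] all z by blast
    then show "z \<in> E" using ni by blast
  qed
  show ?thesis unfolding quasi_prime_def quasi_ideal_def using idl nz pr A B ER by blast
qed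


lemma idealR:
  assumes sub: "subring_of D" and idl: "ideal_of (polyring D) I"
  shows "I \<subseteq> polyring D" "0 \<in> I" "x \<in> I \<Longrightarrow> y \<in> I \<Longrightarrow> x + y \<in> I"
    "r \<in> polyring D \<Longrightarrow> x \<in> I \<Longrightarrow> r * x \<in> I" "r \<in> polyring D \<Longrightarrow> x \<in> I \<Longrightarrow> x * r \<in> I"
    "x \<in> I \<Longrightarrow> y \<in> I \<Longrightarrow> x - y \<in> I"
proof -
  have A: "I \<subseteq> polyring D" "0 \<in> I" "\<And>x y. x \<in> I \<Longrightarrow> y \<in> I \<Longrightarrow> x + y \<in> I"
    "\<And>r x. r \<in> polyring D \<Longrightarrow> x \<in> I \<Longrightarrow> r * x \<in> I"
    using idl unfolding ideal_of_def submod_def by blast+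
  show "I \<subseteq> polyring D" "0 \<in> I" by (fact A(1), fact A(2))
  show "x \<in> I \<Longrightarrow> y \<in> I \<Longrightarrow> x + y \<in> I" by (rule A(3))
  show "r \<in> polyring D \<Longrightarrow> x \<in> I \<Longrightarrow> r * x \<in> I" by (rule A(4))
  show "r \<in> polyring D \<Longrightarrow> x \<in> I \<Longrightarrow> x * r \<in> I" using A(4)[of r x] by (simp add: mult.commute)
  have m1: "- 1 \<in> polyring D"
  proof -
    have "- 1 \<in> PD D" using PD_add(3)[OF sub D_ideal[OF sub] one_PD[OF sub] one_PD[OF sub]] .
    then have "to_fract (- 1) \<in> polyring D" unfolding polyring_eq by blast
    then show ?thesis by (simp add: to_fract_hom(3,6))
  qed
  show "x \<in> I \<Longrightarrow> y \<in> I \<Longrightarrow> x - y \<in> I"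
  proof -
    assume "x \<in> I" "y \<in> I"
    then have "(- 1) * y \<in> I" using A(4) m1 by blast
    then have "x + (- 1) * y \<in> I" using A(3) \<open>x \<in> I\<close> by blast
    then show ?thesis by simp
  qed
qed

lemma poly_decomp:
  fixes f :: "'a::field poly"
  obtains q where "f = [:coeff f 0:] + [:0,1:] * q" "\<And>i. coeff q i = coeff f (Suc i)"
    "f \<noteq> [:coeff f 0:] \<Longrightarrow> degree q < degree f"
proof (cases f rule: pCons_cases)
  case (pCons a q)
  have 1: "f = [:coeff f 0:] + [:0,1:] * q" using pCons by simp
  have 2: "\<And>i. coeff q i = coeff f (Suc i)" using pCons by simp
  have 3: "degree q < degree f" if "f \<noteq> [:coeff f 0:]"
  proof -
    have "q \<noteq> 0" using that pCons by auto
    then show ?thesis using pCons by simp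
  qed
  show ?thesis using that[OF 1 2 3] .
qed

definition XX :: "'a::field poly fract" where "XX = to_fract [:0,1:]"

lemma X_PD: fixes D :: "'a::field set" assumes "subring_of D" shows "[:0,1:] \<in> PD D"
proof -
  have "0 \<in> D" "1 \<in> D" using subringD(1,2)[OF assms] by blast+
  then have "coeff ([:0, 1:] :: 'a poly) i \<in> D" for i :: nat by (cases i) (auto simp: coeff_pCons split: nat.splits)
  then show ?thesis unfolding PD_def by blast
qed

lemma XX_R: "subring_of D \<Longrightarrow> XX \<in> polyring D"
  unfolding XX_def polyring_eq using X_PD by blast

lemma XX_PX:
  assumes sub: "subring_of D" and idl: "ideal_of D P" shows "XX \<in> PX D P"
proof -
  have "[:0,1:] \<in> PXs D P" unfolding PXs_def using X_PD[OF sub] idealD(2)[OF sub idl] by simp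
  then show ?thesis unfolding XX_def PX_def by blast
qed

lemma XX_not_ext:
  assumes sub: "subring_of D" and pr: "prime_ideal_of D P" shows "XX \<notin> ext_ideal P"
proof
  assume "XX \<in> ext_ideal P"
  then have "[:0,1:] \<in> PD P" unfolding XX_def ext_ideal_eq tf_mem .
  then have "coeff [:0,1:] 1 \<in> P" unfolding PD_def by blast
  then show False using prime_oneD[OF sub pr] by simp
qed

lemma const_ext: "c \<in> P \<Longrightarrow> 0 \<in> P \<Longrightarrow> to_fract [:c:] \<in> ext_ideal P"
  unfolding ext_ideal_eq tf_mem PD_const by blast

lemma const_PX: "c \<in> P \<Longrightarrow> P \<subseteq> D \<Longrightarrow> 0 \<in> D \<Longrightarrow> to_fract [:c:] \<in> PX D P"
  unfolding PX_def PXs_def tf_mem by (auto simp: PD_const)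

lemma ext_sub_PX:
  assumes sub: "subring_of D" and idl: "ideal_of D P" shows "ext_ideal P \<subseteq> PX D P"
proof -
  have "PD P \<subseteq> PXs D P" unfolding PXs_def using PD_mono[OF idealD(1)[OF sub idl]] unfolding PD_def by blast
  then show ?thesis unfolding ext_ideal_eq PX_def by blast
qed

lemma PX_mono: "P \<subseteq> Q \<Longrightarrow> PX D P \<subseteq> PX D Q"
  unfolding PX_def PXs_def by blast

lemma to_fract_0 [simp]: "to_fract (0::'a::idom) = 0"
  unfolding to_fract_def by (simp add: Zero_fract_def)

lemma to_fract_1 [simp]: "to_fract (1::'a::idom) = 1"
  unfolding to_fract_def by (simp add: One_fract_def)

lemma const_nz: "c \<noteq> 0 \<Longrightarrow> to_fract [:c:] \<noteq> 0"
  by (metis to_fract_0 to_fract_inj pCons_eq_0_iff)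

lemma contr_prime:
  assumes sub: "subring_of D" and pr: "prime_ideal_of (polyring D) I"
  shows "prime_ideal_of D (contr D I)"
proof -
  have idl: "ideal_of (polyring D) I" and ne: "I \<noteq> polyring D" using pr unfolding prime_ideal_of_def by blast+
  note I = idealR[OF sub idl]
  have cR: "c \<in> D \<Longrightarrow> to_fract [:c:] \<in> polyring D" for c
    unfolding polyring_eq tf_mem PD_const using subringD(1)[OF sub] by blast
  have oneR: "1 \<in> polyring D" using one_PD[OF sub] to_fract_hom(6) unfolding polyring_eq by (metis image_eqI)
  have "ideal_of D (contr D I)" unfolding ideal_of_def submod_def
  proof (intro conjI ballI)
    show "contr D I \<subseteq> D" unfolding contr_def by blast
    show "0 \<in> contr D I" unfolding contr_def using subringD(1)[OF sub] I(2) to_fract_hom(5) by simp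
    fix x y assume "x \<in> contr D I" "y \<in> contr D I"
    then have "x \<in> D" "y \<in> D" "to_fract [:x:] \<in> I" "to_fract [:y:] \<in> I" unfolding contr_def by blast+
    then have "x + y \<in> D" "to_fract [:x:] + to_fract [:y:] \<in> I" using subringD(3)[OF sub] I(3) by blast+
    moreover have "to_fract [:x + y:] = to_fract [:x:] + to_fract [:y:]" by (simp add: to_fract_hom(1)[symmetric])
    ultimately show "x + y \<in> contr D I" unfolding contr_def by simp
  next
    fix r x assume "r \<in> D" "x \<in> contr D I"
    then have "r * x \<in> D" "to_fract [:r:] * to_fract [:x:] \<in> I" using subringD(4)[OF sub] I(4) cR
      unfolding contr_def by blast+
    moreover have "to_fract [:r * x:] = to_fract [:r:] * to_fract [:x:]"
    proof -
      have "[:r:] * [:x:] = [:r * x:]" by simp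
      then show ?thesis using to_fract_hom(2)[of "[:r:]" "[:x:]"] by metis
    qed
    ultimately show "r * x \<in> contr D I" unfolding contr_def by simp
  qed
  moreover have "contr D I \<noteq> D"
  proof
    assume "contr D I = D"
    then have "to_fract [:1:] \<in> I" using subringD(2)[OF sub] unfolding contr_def by blast
    then have "1 \<in> I" by (metis one_pCons to_fract_1)
    then show False using one_notin[OF idl ne oneR] by blast
  qed
  moreover have "\<forall>a\<in>D. \<forall>b\<in>D. a * b \<in> contr D I \<longrightarrow> a \<in> contr D I \<or> b \<in> contr D I"
  proof (intro ballI impI)
    fix a b assume "a \<in> D" "b \<in> D" "a * b \<in> contr D I"
    then have "to_fract [:a * b:] \<in> I" unfolding contr_def by blast
    moreover have "[:a:] * [:b:] = [:a * b:]" by simp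
    ultimately have "to_fract [:a:] * to_fract [:b:] \<in> I" using to_fract_hom(2)[of "[:a:]" "[:b:]"] by metis
    then have "to_fract [:a:] \<in> I \<or> to_fract [:b:] \<in> I" using primeD[OF pr cR[OF \<open>a \<in> D\<close>] cR[OF \<open>b \<in> D\<close>]] by blast
    then show "a \<in> contr D I \<or> b \<in> contr D I" unfolding contr_def using \<open>a \<in> D\<close> \<open>b \<in> D\<close> by blast
  qed
  ultimately show ?thesis unfolding prime_ideal_of_def by blast
qed

lemma max_chain_exists:
  assumes C0S: "C0 \<subseteq> S" and ch: "is_chain_of C0"
  shows "\<exists>C. C0 \<subseteq> C \<and> C \<subseteq> S \<and> is_chain_of C \<and> (\<forall>C'. C \<subseteq> C' \<and> C' \<subseteq> S \<and> is_chain_of C' \<longrightarrow> C' = C)"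
proof -
  define A where "A = {C. C0 \<subseteq> C \<and> C \<subseteq> S \<and> is_chain_of C}"
  have "\<exists>M\<in>A. \<forall>X\<in>A. M \<subseteq> X \<longrightarrow> X = M"
  proof (rule Zorn_Lemma2, rule ballI)
    fix c assume c: "c \<in> chains A"
    have cA: "c \<subseteq> A" using chainsD2[OF c] .
    have cc: "\<And>X Y. X \<in> c \<Longrightarrow> Y \<in> c \<Longrightarrow> X \<subseteq> Y \<or> Y \<subseteq> X" using chainsD[OF c] by blast
    define U where "U = C0 \<union> \<Union>c"
    have "is_chain_of U" unfolding is_chain_of_def
    proof (intro ballI)
      fix x y assume "x \<in> U" "y \<in> U"
      then obtain X Y where X: "X \<in> insert C0 c" "x \<in> X" and Y: "Y \<in> insert C0 c" "y \<in> Y"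
        unfolding U_def by blast
      have XA: "is_chain_of X" "C0 \<subseteq> X" if "X \<in> insert C0 c" for X
        using that cA ch unfolding A_def by blast+
      have "X \<subseteq> Y \<or> Y \<subseteq> X"
        using X(1) Y(1) cc XA(2) by blast
      then show "x \<subseteq> y \<or> y \<subseteq> x"
        using XA(1)[OF X(1)] XA(1)[OF Y(1)] X(2) Y(2) unfolding is_chain_of_def by blast
    qed
    moreover have "U \<subseteq> S" unfolding U_def using C0S cA unfolding A_def by blast
    ultimately have "U \<in> A" unfolding A_def U_def by blast
    moreover have "\<forall>X\<in>c. X \<subseteq> U" unfolding U_def by blast
    ultimately show "\<exists>U\<in>A. \<forall>X\<in>c. X \<subseteq> U" by blast
  qed
  then obtain M where MA: "M \<in> A" and Mmax: "\<forall>X\<in>A. M \<subseteq> X \<longrightarrow> X = M" by blast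
  have "C0 \<subseteq> M" "M \<subseteq> S" "is_chain_of M" using MA unfolding A_def by blast+
  moreover have "\<forall>C'. M \<subseteq> C' \<and> C' \<subseteq> S \<and> is_chain_of C' \<longrightarrow> C' = M"
  proof (intro allI impI)
    fix C' assume a: "M \<subseteq> C' \<and> C' \<subseteq> S \<and> is_chain_of C'"
    then have "C' \<in> A" using \<open>C0 \<subseteq> M\<close> unfolding A_def by blast
    then show "C' = M" using Mmax a by blast
  qed
  ultimately show ?thesis by blast
qed


lemma tf_decomp: "f = [:a:] + [:0,1:] * q \<Longrightarrow> to_fract f = to_fract [:a:] + XX * to_fract q"
  unfolding XX_def using to_fract_hom(1,2) by metis

lemma q_PD: "f \<in> PD D \<Longrightarrow> (\<And>i. coeff q i = coeff f (Suc i)) \<Longrightarrow> q \<in> PD D"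
  unfolding PD_def by simp

lemma descent:
  assumes sub: "subring_of D" and idl: "ideal_of D P" and pr: "prime_ideal_of (polyring D) I"
    and E: "ext_ideal P \<subseteq> I" and IX: "I \<subseteq> PX D P" and nX: "XX \<notin> I"
  shows "f \<in> PD D \<Longrightarrow> to_fract f \<in> I \<Longrightarrow> f \<in> PD P"
proof (induction "degree f" arbitrary: f rule: less_induct)
  case less
  have idlI: "ideal_of (polyring D) I" using pr unfolding prime_ideal_of_def by blast
  note II = idealR[OF sub idlI]
  have "to_fract f \<in> to_fract ` PXs D P" using less(3) IX unfolding PX_def by blast
  then have "f \<in> PXs D P" unfolding tf_mem .
  then have f0: "coeff f 0 \<in> P" unfolding PXs_def by blast
  have P0: "0 \<in> P" using idealD(2)[OF sub idl] .
  obtain q where q1: "f = [:coeff f 0:] + [:0,1:] * q" and q2: "\<And>i. coeff q i = coeff f (Suc i)"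
    and q3: "f \<noteq> [:coeff f 0:] \<Longrightarrow> degree q < degree f" by (rule poly_decomp[of f]) blast
  show ?case
  proof (cases "f = [:coeff f 0:]")
    case True
    then show ?thesis using f0 P0 PD_const by metis
  next
    case False
    have qD: "q \<in> PD D" using q_PD[OF less(2) q2] .
    have qR: "to_fract q \<in> polyring D" using qD unfolding polyring_eq by blast
    have c: "to_fract [:coeff f 0:] \<in> I" using const_ext[OF f0 P0] E by blast
    have "to_fract f = to_fract [:coeff f 0:] + XX * to_fract q" using tf_decomp[OF q1] .
    then have "XX * to_fract q = to_fract f - to_fract [:coeff f 0:]" by simp
    then have "XX * to_fract q \<in> I" using II(6)[OF less(3) c] by simp
    then have "XX \<in> I \<or> to_fract q \<in> I" using primeD[OF pr XX_R[OF sub] qR] by blast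
    then have "to_fract q \<in> I" using nX by blast
    then have qP: "q \<in> PD P" using less(1)[OF q3[OF False] qD] by blast
    show ?thesis unfolding PD_def mem_Collect_eq
    proof
      fix i show "coeff f i \<in> P"
      proof (cases i)
        case 0 then show ?thesis using f0 by simp
      next
        case (Suc j)
        have "coeff q j \<in> P" using qP unfolding PD_def by blast
        then show ?thesis using q2[of j] Suc by simp
      qed
    qed
  qed
qed

lemma I_eq_PX:
  assumes sub: "subring_of D" and idlI: "ideal_of (polyring D) I" and XI: "XX \<in> I" and IX: "I \<subseteq> PX D Q"
  shows "I = PX D (contr D I)"
proof
  note II = idealR[OF sub idlI]
  show "I \<subseteq> PX D (contr D I)"
  proof
    fix z assume zI: "z \<in> I"
    then obtain f where zf: "z = to_fract f" and fX: "f \<in> PXs D Q" using IX unfolding PX_def by blast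
    have fD: "f \<in> PD D" using fX unfolding PXs_def by blast
    obtain q where q1: "f = [:coeff f 0:] + [:0,1:] * q" and q2: "\<And>i. coeff q i = coeff f (Suc i)"
      and "f \<noteq> [:coeff f 0:] \<Longrightarrow> degree q < degree f" by (rule poly_decomp[of f]) blast
    have qR: "to_fract q \<in> polyring D" using q_PD[OF fD q2] unfolding polyring_eq by blast
    have "XX * to_fract q \<in> I" using II(5)[OF qR XI] .
    moreover have "to_fract [:coeff f 0:] = z - XX * to_fract q" using tf_decomp[OF q1] zf by simp
    ultimately have "to_fract [:coeff f 0:] \<in> I" using II(6)[OF zI] by simp
    moreover have "coeff f 0 \<in> D" using fD unfolding PD_def by blast
    ultimately have "coeff f 0 \<in> contr D I" unfolding contr_def by blast
    then have "f \<in> PXs D (contr D I)" using fD unfolding PXs_def by blast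
    then show "z \<in> PX D (contr D I)" unfolding PX_def zf by blast
  qed
  show "PX D (contr D I) \<subseteq> I"
  proof
    fix z assume "z \<in> PX D (contr D I)"
    then obtain f where zf: "z = to_fract f" and fX: "f \<in> PXs D (contr D I)" unfolding PX_def by blast
    have fD: "f \<in> PD D" and f0: "to_fract [:coeff f 0:] \<in> I" using fX unfolding PXs_def contr_def by blast+
    obtain q where q1: "f = [:coeff f 0:] + [:0,1:] * q" and q2: "\<And>i. coeff q i = coeff f (Suc i)"
      and "f \<noteq> [:coeff f 0:] \<Longrightarrow> degree q < degree f" by (rule poly_decomp[of f]) blast
    have qR: "to_fract q \<in> polyring D" using q_PD[OF fD q2] unfolding polyring_eq by blast
    have "XX * to_fract q \<in> I" using II(5)[OF qR XI] .
    then have "to_fract [:coeff f 0:] + XX * to_fract q \<in> I" using II(3)[OF f0] by blast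
    then show "z \<in> I" using tf_decomp[OF q1] zf by simp
  qed
qed

lemma theta_mem:
  assumes sub: "subring_of D" and sem: "semistar D st" and qm: "quasi_max D (star_f D st) M"
    and pr: "prime_ideal_of D P" and PM: "P \<subseteq> M"
  shows "ext_ideal P \<in> Theta D st" "PX D P \<in> Theta D st"
proof -
  have idl: "ideal_of D P" using pr unfolding prime_ideal_of_def by blast
  have st: "star_f D st P \<subset> st D" using theta_strict[OF sub sem qm PM] .
  show "ext_ideal P \<in> Theta D st" unfolding Theta_def
    using ext_prime[OF sub pr] contr_ext[OF sub idl] st by simp
  show "PX D P \<in> Theta D st" unfolding Theta_def
    using PX_prime[OF sub pr] contr_PX[OF sub idl] st by simp
qed

lemma nz_ext:
  assumes sub: "subring_of D" and idl: "ideal_of D P" and nz: "P \<noteq> {0}"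
  shows "ext_ideal P \<noteq> {0}" "PX D P \<noteq> {0}"
proof -
  have P0: "0 \<in> P" using idealD(2)[OF sub idl] .
  then obtain c where c: "c \<in> P" "c \<noteq> 0" using nz by blast
  have "to_fract [:c:] \<in> ext_ideal P" using const_ext[OF c(1) P0] .
  then show "ext_ideal P \<noteq> {0}" using const_nz[OF c(2)] by blast
  have "to_fract [:c:] \<in> PX D P" using const_PX[OF c(1) idealD(1)[OF sub idl] subringD(1)[OF sub]] .
  then show "PX D P \<noteq> {0}" using const_nz[OF c(2)] by blast
qed


lemma contr_mono: "A \<subseteq> B \<Longrightarrow> contr D A \<subseteq> contr D B"
  unfolding contr_def by blast

lemma sat_C1:
  assumes sub: "subring_of D" and sem: "semistar D st" and qm: "quasi_max D (star_f D st) M"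
    and pr1: "prime_ideal_of D P1" and pr2: "prime_ideal_of D P2" and nz1: "P1 \<noteq> {0}"
    and P12: "P1 \<subseteq> P2" and P2M: "P2 \<subseteq> M"
    and adj: "\<And>J. quasi_prime D (star_tilde D st) J \<Longrightarrow> P1 \<subseteq> J \<Longrightarrow> J \<subseteq> P2 \<Longrightarrow> J = P1 \<or> J = P2"
  shows "sat_chain (polyring D) (starX D st) (ext_ideal P1) (PX D P2) {ext_ideal P1, PX D P1, PX D P2}"
proof -
  have idl1: "ideal_of D P1" and idl2: "ideal_of D P2" using pr1 pr2 unfolding prime_ideal_of_def by blast+
  have P1M: "P1 \<subseteq> M" using P12 P2M by blast
  have nz2: "P2 \<noteq> {0}" using nz1 P12 idealD(2)[OF sub idl1] by blast
  have QE1: "quasi_prime (polyring D) (starX D st) (ext_ideal P1)"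
    using theta_qprime[OF sub theta_mem(1)[OF sub sem qm pr1 P1M] nz_ext(1)[OF sub idl1 nz1]] .
  have QX1: "quasi_prime (polyring D) (starX D st) (PX D P1)"
    using theta_qprime[OF sub theta_mem(2)[OF sub sem qm pr1 P1M] nz_ext(2)[OF sub idl1 nz1]] .
  have QX2: "quasi_prime (polyring D) (starX D st) (PX D P2)"
    using theta_qprime[OF sub theta_mem(2)[OF sub sem qm pr2 P2M] nz_ext(2)[OF sub idl2 nz2]] .
  have i1: "ext_ideal P1 \<subseteq> PX D P1" using ext_sub_PX[OF sub idl1] .
  have i2: "PX D P1 \<subseteq> PX D P2" using PX_mono[OF P12] .
  have CS: "{ext_ideal P1, PX D P1, PX D P2} \<subseteq> qprimes_between (polyring D) (starX D st) (ext_ideal P1) (PX D P2)"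
    unfolding qprimes_between_def using QE1 QX1 QX2 i1 i2 by blast
  have ch: "is_chain_of {ext_ideal P1, PX D P1, PX D P2}" unfolding is_chain_of_def using i1 i2 by blast
  have mx: "\<forall>C'. {ext_ideal P1, PX D P1, PX D P2} \<subseteq> C' \<and> C' \<subseteq> qprimes_between (polyring D) (starX D st) (ext_ideal P1) (PX D P2) \<and> is_chain_of C' \<longrightarrow> C' = {ext_ideal P1, PX D P1, PX D P2}"
  proof (intro allI impI)
    fix C' assume a: "{ext_ideal P1, PX D P1, PX D P2} \<subseteq> C' \<and> C' \<subseteq> qprimes_between (polyring D) (starX D st) (ext_ideal P1) (PX D P2) \<and> is_chain_of C'"
    have "C' \<subseteq> {ext_ideal P1, PX D P1, PX D P2}"
    proof
      fix I assume IC: "I \<in> C'"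
      then have "I \<in> qprimes_between (polyring D) (starX D st) (ext_ideal P1) (PX D P2)" using a by blast
      then have qI: "quasi_prime (polyring D) (starX D st) I" and EI: "ext_ideal P1 \<subseteq> I" and IX: "I \<subseteq> PX D P2"
        unfolding qprimes_between_def by blast+
      have prI: "prime_ideal_of (polyring D) I" using qI unfolding quasi_prime_def by blast
      have idlI: "ideal_of (polyring D) I" using prI unfolding prime_ideal_of_def by blast
      have "PX D P1 \<in> C'" using a by blast
      then have "I \<subseteq> PX D P1 \<or> PX D P1 \<subseteq> I" using a IC unfolding is_chain_of_def by blast
      then show "I \<in> {ext_ideal P1, PX D P1, PX D P2}"
      proof
        assume IX1: "I \<subseteq> PX D P1"
        show ?thesis
        proof (cases "XX \<in> I")
          case True
          have "I = PX D (contr D I)" using I_eq_PX[OF sub idlI True IX1] .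
          moreover have "contr D I = P1"
            using contr_mono[OF IX1, of D] contr_mono[OF EI, of D] contr_PX[OF sub idl1] contr_ext[OF sub idl1]
            by blast
          ultimately show ?thesis by simp
        next
          case False
          have "I \<subseteq> ext_ideal P1"
          proof
            fix z assume zI: "z \<in> I"
            then have "z \<in> polyring D" using idealR(1)[OF sub idlI] by blast
            then obtain f where f: "f \<in> PD D" "z = to_fract f" unfolding polyring_eq by blast
            then have "f \<in> PD P1" using descent[OF sub idl1 prI EI IX1 False] zI by blast
            then show "z \<in> ext_ideal P1" unfolding ext_ideal_eq f(2) by blast
          qed
          then have "I = ext_ideal P1" using EI by blast
          then show ?thesis by simp
        qed
      next
        assume X1I: "PX D P1 \<subseteq> I"
        have XI: "XX \<in> I" using XX_PX[OF sub idl1] X1I by blast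
        define J where "J = contr D I"
        have IJ: "I = PX D J" unfolding J_def using I_eq_PX[OF sub idlI XI IX] .
        have prJ: "prime_ideal_of D J" unfolding J_def using contr_prime[OF sub prI] .
        have P1J: "P1 \<subseteq> J" unfolding J_def using contr_mono[OF EI, of D] contr_ext[OF sub idl1] by blast
        have JP2: "J \<subseteq> P2" unfolding J_def using contr_mono[OF IX, of D] contr_PX[OF sub idl2] by blast
        have "J \<noteq> {0}" using P1J nz1 idealD(2)[OF sub idl1] by blast
        then have "quasi_prime D (star_tilde D st) J" using tilde_prime[OF sub qm prJ] JP2 P2M by blast
        then have "J = P1 \<or> J = P2" using adj P1J JP2 by blast
        then show ?thesis using IJ by blast
      qed
    qed
    then show "C' = {ext_ideal P1, PX D P1, PX D P2}" using a by blast
  qed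
  show ?thesis unfolding sat_chain_def using CS ch mx by blast
qed


lemma theta_strict_tilde:
  assumes sub: "subring_of D" and qm: "quasi_max D (star_f D st) M" and PM: "P \<subseteq> M"
  shows "star_f D (star_tilde D st) P \<subset> star_tilde D st D"
proof -
  have MD: "M \<subseteq> D" using qmaxD(5)[OF qm] .
  have one: "1 \<in> D" using subringD(2)[OF sub] .
  have s1: "star_f D (star_tilde D st) P \<subseteq> star_tilde D st D"
  proof
    fix x assume "x \<in> star_f D (star_tilde D st) P"
    then obtain F where F: "F \<subseteq> P" "x \<in> star_tilde D st F" unfolding star_f_def by blast
    have FD: "F \<subseteq> D" using F(1) PM MD by blast
    show "x \<in> star_tilde D st D" unfolding star_tilde_def
    proof (rule InterI)
      fix X assume "X \<in> {loc D N D | N. quasi_max D (star_f D st) N}"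
      then obtain N where X: "X = loc D N D" and qn: "quasi_max D (star_f D st) N" by blast
      have "loc D N F \<in> {loc D N F | N. quasi_max D (star_f D st) N}" using qn by blast
      then have "x \<in> loc D N F" using F(2) unfolding star_tilde_def by blast
      moreover have "loc D N F \<subseteq> loc D N D" unfolding loc_def using FD by blast
      ultimately show "x \<in> X" unfolding X by blast
    qed
  qed
  have "1 \<in> star_tilde D st D" unfolding star_tilde_def
  proof (rule InterI)
    fix X assume "X \<in> {loc D N D | N. quasi_max D (star_f D st) N}"
    then obtain N where X: "X = loc D N D" and qn: "quasi_max D (star_f D st) N" by blast
    have "1 \<notin> N" using one_notin[OF qmaxD(1,2)[OF qn] one] .
    moreover have "(1::'a) = 1 / 1" by simp
    ultimately show "1 \<in> X" unfolding X loc_def mem_Collect_eq using one by blast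
  qed
  moreover have "1 \<notin> star_f D (star_tilde D st) P"
  proof
    assume "1 \<in> star_f D (star_tilde D st) P"
    then obtain F where F: "F \<subseteq> P" "1 \<in> star_tilde D st F" unfolding star_f_def by blast
    have "loc D M F \<in> {loc D N F | N. quasi_max D (star_f D st) N}" using qm by blast
    then have "1 \<in> loc D M F" using F(2) unfolding star_tilde_def by blast
    then obtain e s where es: "1 = e / s" "e \<in> F" "s \<in> D" "s \<notin> M" unfolding loc_def by blast
    have "s \<noteq> 0" using es(4) qmaxD(4)[OF qm] by blast
    then have "e = s" using es(1) by (simp add: field_simps)
    moreover have "e \<in> M" using es(2) F(1) PM by blast
    ultimately show False using es(4) by blast
  qed
  ultimately show ?thesis using s1 by blast
qed

lemma theta_mem_tilde:
  assumes sub: "subring_of D" and qm: "quasi_max D (star_f D st) M"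
    and pr: "prime_ideal_of D P" and PM: "P \<subseteq> M"
  shows "ext_ideal P \<in> Theta D (star_tilde D st)"
proof -
  have idl: "ideal_of D P" using pr unfolding prime_ideal_of_def by blast
  show ?thesis unfolding Theta_def
    using ext_prime[OF sub pr] contr_ext[OF sub idl] theta_strict_tilde[OF sub qm PM] by simp
qed

lemma Q_theta:
  assumes sub: "subring_of D" and sem: "semistar D st" and qm: "quasi_max D (star_f D st) M"
    and prQ: "prime_ideal_of (polyring D) Q" and idl2: "ideal_of D P2"
    and QE: "Q \<subseteq> ext_ideal P2" and P2M: "P2 \<subseteq> M"
  shows "Q \<in> Theta D st"
proof -
  have "contr D Q \<subseteq> P2" using contr_mono[OF QE, of D] contr_ext[OF sub idl2] by blast
  then have "contr D Q \<subseteq> M" using P2M by blast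
  then show ?thesis unfolding Theta_def using prQ theta_strict[OF sub sem qm] by blast
qed

theorem mainTheorem9:
  fixes D :: "'a::field set" and st :: "'a set \<Rightarrow> 'a set"
  assumes "domain_with_qf D"
    and "semistar D st"
    and "star_catenary (polyring D) (starX D st)"
  shows "strong_S_domain D (star_tilde D st)"
proof -
  have sub: "subring_of D" using assms(1) unfolding domain_with_qf_def by blast
  note sem = assms(2)
  show ?thesis unfolding strong_S_domain_def
  proof (intro allI impI)
    fix P1 P2 assume adjq: "adjacent_qprimes D (star_tilde D st) P1 P2"
    have q1: "quasi_prime D (star_tilde D st) P1" and q2: "quasi_prime D (star_tilde D st) P2"
      and lt: "P1 \<subset> P2"
      and nb: "\<not> (\<exists>P. quasi_prime D (star_tilde D st) P \<and> P1 \<subset> P \<and> P \<subset> P2)"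
      using adjq unfolding adjacent_qprimes_def by blast+
    have pr1: "prime_ideal_of D P1" and pr2: "prime_ideal_of D P2"
      using q1 q2 unfolding quasi_prime_def by blast+
    have nz1: "P1 \<noteq> {0}" using q1 unfolding quasi_prime_def quasi_ideal_def by blast
    have qi2: "quasi_ideal D (star_tilde D st) P2" using q2 unfolding quasi_prime_def by blast
    have ne2: "P2 \<noteq> D" using pr2 unfolding prime_ideal_of_def by blast
    have idl1: "ideal_of D P1" and idl2: "ideal_of D P2" using pr1 pr2 unfolding prime_ideal_of_def by blast+
    obtain M where qm: "quasi_max D (star_f D st) M" and P2M: "P2 \<subseteq> M"
      using tilde_max[OF sub qi2 ne2] by blast
    have P12: "P1 \<subseteq> P2" using lt by blast
    have P1M: "P1 \<subseteq> M" using P12 P2M by blast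
    have nz2: "P2 \<noteq> {0}" using nz1 P12 idealD(2)[OF sub idl1] by blast
    have adj: "\<And>J. quasi_prime D (star_tilde D st) J \<Longrightarrow> P1 \<subseteq> J \<Longrightarrow> J \<subseteq> P2 \<Longrightarrow> J = P1 \<or> J = P2"
      using nb by blast
    have QE1: "quasi_prime (polyring D) (starX D st) (ext_ideal P1)"
      using theta_qprime[OF sub theta_mem(1)[OF sub sem qm pr1 P1M] nz_ext(1)[OF sub idl1 nz1]] .
    have QE2: "quasi_prime (polyring D) (starX D st) (ext_ideal P2)"
      using theta_qprime[OF sub theta_mem(1)[OF sub sem qm pr2 P2M] nz_ext(1)[OF sub idl2 nz2]] .
    have QE1': "quasi_prime (polyring D) (starX D (star_tilde D st)) (ext_ideal P1)"
      using theta_qprime[OF sub theta_mem_tilde[OF sub qm pr1 P1M] nz_ext(1)[OF sub idl1 nz1]] .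
    have QE2': "quasi_prime (polyring D) (starX D (star_tilde D st)) (ext_ideal P2)"
      using theta_qprime[OF sub theta_mem_tilde[OF sub qm pr2 P2M] nz_ext(1)[OF sub idl2 nz2]] .
    have QX2: "quasi_prime (polyring D) (starX D st) (PX D P2)"
      using theta_qprime[OF sub theta_mem(2)[OF sub sem qm pr2 P2M] nz_ext(2)[OF sub idl2 nz2]] .
    have E12: "ext_ideal P1 \<subseteq> ext_ideal P2" unfolding ext_ideal_eq using PD_mono[OF P12] by blast
    have E2X2: "ext_ideal P2 \<subseteq> PX D P2" using ext_sub_PX[OF sub idl2] .
    have E1X1: "ext_ideal P1 \<subseteq> PX D P1" using ext_sub_PX[OF sub idl1] .
    have X12: "PX D P1 \<subseteq> PX D P2" using PX_mono[OF P12] .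
    obtain c where c2: "c \<in> P2" and c1: "c \<notin> P1" using lt by blast
    have P20: "0 \<in> P2" using idealD(2)[OF sub idl2] .
    have cE2: "to_fract [:c:] \<in> ext_ideal P2" using const_ext[OF c2 P20] .
    have cX2: "to_fract [:c:] \<in> PX D P2" using cE2 E2X2 by blast
    have cnX1: "to_fract [:c:] \<notin> PX D P1"
    proof
      assume "to_fract [:c:] \<in> PX D P1"
      then have "[:c:] \<in> PXs D P1" unfolding PX_def tf_mem .
      then show False using c1 unfolding PXs_def by simp
    qed
    have cnE1: "to_fract [:c:] \<notin> ext_ideal P1" using cnX1 E1X1 by blast
    have XX1: "XX \<in> PX D P1" using XX_PX[OF sub idl1] .
    have XX2: "XX \<in> PX D P2" using XX_PX[OF sub idl2] .
    have nXE2: "XX \<notin> ext_ideal P2" using XX_not_ext[OF sub pr2] .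
    have nXE1: "XX \<notin> ext_ideal P1" using nXE2 E12 by blast
    show "adjacent_qprimes (polyring D) (starX D (star_tilde D st)) (ext_ideal P1) (ext_ideal P2)"
      unfolding adjacent_qprimes_def
    proof (intro conjI)
      show "quasi_prime (polyring D) (starX D (star_tilde D st)) (ext_ideal P1)" by (rule QE1')
      show "quasi_prime (polyring D) (starX D (star_tilde D st)) (ext_ideal P2)" by (rule QE2')
      show "ext_ideal P1 \<subset> ext_ideal P2" using E12 cE2 cnE1 by blast
      show "\<not> (\<exists>P. quasi_prime (polyring D) (starX D (star_tilde D st)) P \<and> ext_ideal P1 \<subset> P \<and> P \<subset> ext_ideal P2)"
      proof
        assume "\<exists>P. quasi_prime (polyring D) (starX D (star_tilde D st)) P \<and> ext_ideal P1 \<subset> P \<and> P \<subset> ext_ideal P2"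
        then obtain Q where qQ': "quasi_prime (polyring D) (starX D (star_tilde D st)) Q"
          and EQ: "ext_ideal P1 \<subset> Q" and QE: "Q \<subset> ext_ideal P2" by blast
        have prQ: "prime_ideal_of (polyring D) Q" using qQ' unfolding quasi_prime_def by blast
        have nzQ: "Q \<noteq> {0}" using qQ' unfolding quasi_prime_def quasi_ideal_def by blast
        have qQ: "quasi_prime (polyring D) (starX D st) Q"
          using theta_qprime[OF sub Q_theta[OF sub sem qm prQ idl2 _ P2M] nzQ] QE by blast
        define S where "S = qprimes_between (polyring D) (starX D st) (ext_ideal P1) (PX D P2)"
        have sat1: "sat_chain (polyring D) (starX D st) (ext_ideal P1) (PX D P2) {ext_ideal P1, PX D P1, PX D P2}"
          using sat_C1[OF sub sem qm pr1 pr2 nz1 P12 P2M adj] by blast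
        define C0 where "C0 = {ext_ideal P1, Q, ext_ideal P2, PX D P2}"
        have C0S: "C0 \<subseteq> S" unfolding C0_def S_def qprimes_between_def
          using QE1 qQ QE2 QX2 EQ QE E12 E2X2 by blast
        have chC0: "is_chain_of C0" unfolding C0_def is_chain_of_def using EQ QE E12 E2X2 by blast
        obtain C2 where C2: "C0 \<subseteq> C2" "C2 \<subseteq> S" "is_chain_of C2"
          and C2m: "\<forall>C'. C2 \<subseteq> C' \<and> C' \<subseteq> S \<and> is_chain_of C' \<longrightarrow> C' = C2"
          using max_chain_exists[OF C0S chC0] by blast
        have sat2: "sat_chain (polyring D) (starX D st) (ext_ideal P1) (PX D P2) C2"
          unfolding sat_chain_def using C2 C2m unfolding S_def C0_def by blast
        have E1X2: "ext_ideal P1 \<subset> PX D P2" using E12 E2X2 XX2 nXE1 by blast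
        have "finite C2 \<and> card {ext_ideal P1, PX D P1, PX D P2} = card C2"
          using assms(3) QE1 QX2 E1X2 sat1 sat2 unfolding star_catenary_def by blast
        then have finC2: "finite C2" and cardeq: "card {ext_ideal P1, PX D P1, PX D P2} = card C2" by blast+
        have d1: "ext_ideal P1 \<noteq> PX D P1" using XX1 nXE1 by blast
        have d2: "PX D P1 \<noteq> PX D P2" using cX2 cnX1 by blast
        have d3: "ext_ideal P1 \<noteq> PX D P2" using XX2 nXE1 by blast
        have "card {ext_ideal P1, PX D P1, PX D P2} = 3" using d1 d2 d3 by simp
        have e1: "ext_ideal P1 \<noteq> Q" using EQ by blast
        have e2: "ext_ideal P1 \<noteq> ext_ideal P2" using cE2 cnE1 by blast
        have e3: "ext_ideal P1 \<noteq> PX D P2" by (rule d3)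
        have e4: "Q \<noteq> ext_ideal P2" using QE by blast
        have e5: "Q \<noteq> PX D P2" using QE XX2 nXE2 by blast
        have e6: "ext_ideal P2 \<noteq> PX D P2" using XX2 nXE2 by blast
        have "card C0 = 4" unfolding C0_def using e1 e2 e3 e4 e5 e6 by simp
        moreover have "card C0 \<le> card C2" using card_mono[OF finC2 C2(1)] .
        ultimately show False using cardeq \<open>card {ext_ideal P1, PX D P1, PX D P2} = 3\<close> by simp
      qed
    qed
  qed
qed

end
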